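(* Let $B \in \mathbb{R}^{n \times m}$, $c \in \mathbb{R}^m_>$, and let $C = C_1 \times \cdots \times C_\ell \subseteq \mathbb{R}^m_>$ be a nonempty coefficient cone with cones $C_i \subseteq \mathbb{R}^{m_i}_>$, $m_1 + \cdots + m_\ell = m$. Let $P$, $D$, $L$, $I$, $M$ be as in the context, let $M^* \in \mathbb{R}^{(m-\ell)\times n}$ be any generalized inverse of $M$ (i.e. $M M^* M = M$), and set $E = I\,M^* \in \mathbb{R}^{m \times n}$. Then the solution set \[ Z_c = \{ x \in \mathbb{R}^n_> \mid (c \circ x^B) \in C \} \] can be written as \[ Z_c = \{ (y \circ c^{-1})^E \mid y \in Y_c \} \circ e^{L^\perp}, \qquad Y_c = \{ y \in P \mid y^z = c^z \text{ for all } z \in D \}. \]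
   Context: Notation: $\mathbb{R}_>$ denotes the positive reals. For $x \in \mathbb{R}^n_>$ and $y \in \mathbb{R}^n$, $x^y = \prod_{i=1}^n x_i^{y_i}$; for $Y = (y^1,\ldots,y^m) \in \mathbb{R}^{n\times m}$, $x^Y \in \mathbb{R}^m_>$ is given by $(x^Y)_j = x^{y^j}$. The symbol $\circ$ denotes the componentwise product, $c^{-1}$ the componentwise inverse, and for a set $S \subseteq \mathbb{R}^n_>$ and a subspace $V$, $S \circ e^{V} = \{ s \circ e^v \mid s \in S, v \in V\}$ with $e^v$ componentwise. A cone here means a set closed under multiplication by positive scalars. The partition $m = m_1+\cdots+m_\ell$ splits indices $\{1,\ldots,m\}$ into $\ell$ consecutive classes, correspondingly $B = (B_1 \ \cdots\ B_\ell)$ with $B_i \in \mathbb{R}^{n\times m_i}$. Definitions: $\Delta = \Delta_{m_1-1}\times\cdots\times\Delta_{m_\ell-1}$ with $\Delta_{m_i-1} = \{ y \in \mathbb{R}^{m_i}_{\ge} \mid \sum_j y_j = 1\}$; the coefficient set is $P = C \cap \Delta$. For $k \ge 1$, $I_k = \begin{pmatrix} \mathrm{id}_{k-1} \\ -1_{k-1}^{\mathsf T}\end{pmatrix} \in \mathbb{R}^{k\times(k-1)}$, and $I = \mathrm{diag}(I_{m_1},\ldots,I_{m_\ell}) \in \mathbb{R}^{m\times(m-\ell)}$ is block-diagonal. $M = B\,I \in \mathbb{R}^{n\times(m-\ell)}$, the monomial difference subspace is $L = \operatorname{im} M \subseteq \mathbb{R}^n$, and $L^\perp$ its orthogonal complement.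 $J = \mathrm{diag}(1_{m_1}^{\mathsf T},\ldots,1_{m_\ell}^{\mathsf T}) \in \mathbb{R}^{\ell\times m}$ is block-diagonal, $\mathcal{B} = \begin{pmatrix} B \\ J\end{pmatrix} \in \mathbb{R}^{(n+\ell)\times m}$, and the monomial dependency subspace is $D = \ker \mathcal{B} \subseteq \mathbb{R}^m$. *)

theory Defs
  imports Complex_Main
begin

text \<open>Vectors in R^n are functions nat => real vanishing at indices >= n;
  matrices are functions nat => nat => real used only on the index ranges given.\<close>

definition vecs :: "nat \<Rightarrow> (nat \<Rightarrow> real) set" where
  "vecs n = {v. \<forall>i\<ge>n. v i = 0}"

definition posvecs :: "nat \<Rightarrow> (nat \<Rightarrow> real) set" where
  "posvecs n = {v \<in> vecs n. \<forall>i<n. v i > 0}"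

definition is_cone :: "(nat \<Rightarrow> real) set \<Rightarrow> bool" where
  "is_cone S \<longleftrightarrow> (\<forall>v\<in>S. \<forall>t::real. t > 0 \<longrightarrow> (\<lambda>i. t * v i) \<in> S)"

definition bstart :: "nat list \<Rightarrow> nat \<Rightarrow> nat" where
  "bstart ms k = sum_list (take k ms)"

definition blockv :: "nat list \<Rightarrow> nat \<Rightarrow> (nat \<Rightarrow> real) \<Rightarrow> (nat \<Rightarrow> real)" where
  "blockv ms k y = (\<lambda>a. if a < ms ! k then y (bstart ms k + a) else 0)"

definition coeff_cone :: "nat list \<Rightarrow> (nat \<Rightarrow> (nat \<Rightarrow> real) set) \<Rightarrow> (nat \<Rightarrow> real) set" where
  "coeff_cone ms Cs = {y \<in> vecs (sum_list ms). \<forall>k<length ms. blockv ms k y \<in> Cs k}"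

definition simplices :: "nat list \<Rightarrow> (nat \<Rightarrow> real) set" where
  "simplices ms = {y \<in> vecs (sum_list ms). (\<forall>j. y j \<ge> 0) \<and>
      (\<forall>k<length ms. (\<Sum>a<ms ! k. y (bstart ms k + a)) = 1)}"

definition coeff_set :: "nat list \<Rightarrow> (nat \<Rightarrow> (nat \<Rightarrow> real) set) \<Rightarrow> (nat \<Rightarrow> real) set" where
  "coeff_set ms Cs = coeff_cone ms Cs \<inter> simplices ms"

definition Iblock :: "nat \<Rightarrow> nat \<Rightarrow> nat \<Rightarrow> real" where
  "Iblock k a b = (if a = b then 1 else if a = k - 1 then -1 else 0)"

text \<open>I = diag(I_{m_1},...,I_{m_l}) in R^{m x (m-l)}; column block k starts at bstart ms k - k.\<close>
definition Imat :: "nat list \<Rightarrow> nat \<Rightarrow> nat \<Rightarrow> real" where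
  "Imat ms r c = (\<Sum>k<length ms.
      if bstart ms k \<le> r \<and> r < bstart ms k + ms ! k \<and>
         bstart ms k - k \<le> c \<and> c < bstart ms k - k + (ms ! k - 1)
      then Iblock (ms ! k) (r - bstart ms k) (c - (bstart ms k - k)) else 0)"

definition Jmat :: "nat list \<Rightarrow> nat \<Rightarrow> nat \<Rightarrow> real" where
  "Jmat ms k j = (if bstart ms k \<le> j \<and> j < bstart ms k + ms ! k then 1 else 0)"

definition mmul :: "(nat \<Rightarrow> nat \<Rightarrow> real) \<Rightarrow> (nat \<Rightarrow> nat \<Rightarrow> real) \<Rightarrow> nat \<Rightarrow> nat \<Rightarrow> nat \<Rightarrow> real" where
  "mmul A B p = (\<lambda>i j. \<Sum>l<p. A i l * B l j)"

definition vpow :: "(nat \<Rightarrow> real) \<Rightarrow> (nat \<Rightarrow> real) \<Rightarrow> nat \<Rightarrow> real" where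
  "vpow x z p = (\<Prod>i<p. x i powr z i)"

definition mpow :: "(nat \<Rightarrow> real) \<Rightarrow> (nat \<Rightarrow> nat \<Rightarrow> real) \<Rightarrow> nat \<Rightarrow> nat \<Rightarrow> (nat \<Rightarrow> real)" where
  "mpow x Y p q = (\<lambda>j. if j < q then vpow x (\<lambda>i. Y i j) p else 0)"

definition Mmat :: "nat list \<Rightarrow> (nat \<Rightarrow> nat \<Rightarrow> real) \<Rightarrow> nat \<Rightarrow> nat \<Rightarrow> real" where
  "Mmat ms B = mmul B (Imat ms) (sum_list ms)"

definition Lsp :: "nat list \<Rightarrow> nat \<Rightarrow> (nat \<Rightarrow> nat \<Rightarrow> real) \<Rightarrow> (nat \<Rightarrow> real) set" where
  "Lsp ms n B = {v \<in> vecs n. \<exists>u \<in> vecs (sum_list ms - length ms).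
      \<forall>i<n. v i = (\<Sum>j < sum_list ms - length ms. Mmat ms B i j * u j)}"

definition Lperp :: "nat list \<Rightarrow> nat \<Rightarrow> (nat \<Rightarrow> nat \<Rightarrow> real) \<Rightarrow> (nat \<Rightarrow> real) set" where
  "Lperp ms n B = {w \<in> vecs n. \<forall>v \<in> Lsp ms n B. (\<Sum>i<n. w i * v i) = 0}"

definition Bcal :: "nat list \<Rightarrow> nat \<Rightarrow> (nat \<Rightarrow> nat \<Rightarrow> real) \<Rightarrow> nat \<Rightarrow> nat \<Rightarrow> real" where
  "Bcal ms n B = (\<lambda>i j. if i < n then B i j else Jmat ms (i - n) j)"

definition Dsp :: "nat list \<Rightarrow> nat \<Rightarrow> (nat \<Rightarrow> nat \<Rightarrow> real) \<Rightarrow> (nat \<Rightarrow> real) set" where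
  "Dsp ms n B = {z \<in> vecs (sum_list ms).
      \<forall>i < n + length ms. (\<Sum>j < sum_list ms. Bcal ms n B i j * z j) = 0}"

definition Zc :: "nat list \<Rightarrow> (nat \<Rightarrow> (nat \<Rightarrow> real) set) \<Rightarrow> nat \<Rightarrow> (nat \<Rightarrow> nat \<Rightarrow> real)
    \<Rightarrow> (nat \<Rightarrow> real) \<Rightarrow> (nat \<Rightarrow> real) set" where
  "Zc ms Cs n B c = {x \<in> posvecs n.
      (\<lambda>j. if j < sum_list ms then c j * mpow x B n (sum_list ms) j else 0) \<in> coeff_cone ms Cs}"

definition Yc :: "nat list \<Rightarrow> (nat \<Rightarrow> (nat \<Rightarrow> real) set) \<Rightarrow> nat \<Rightarrow> (nat \<Rightarrow> nat \<Rightarrow> real)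
    \<Rightarrow> (nat \<Rightarrow> real) \<Rightarrow> (nat \<Rightarrow> real) set" where
  "Yc ms Cs n B c = {y \<in> coeff_set ms Cs.
      \<forall>z \<in> Dsp ms n B. vpow y z (sum_list ms) = vpow c z (sum_list ms)}"

end

theory Submission imports Defs begin

lemma bstart_0[simp]: "bstart ms 0 = 0" by (simp add: bstart_def)

lemma bstart_Suc: "k < length ms \<Longrightarrow> bstart ms (Suc k) = bstart ms k + ms ! k"
  by (simp add: bstart_def take_Suc_conv_app_nth)

lemma bstart_len: "bstart ms (length ms) = sum_list ms"
  by (simp add: bstart_def)

lemma bstart_mono: "k \<le> k' \<Longrightarrow> bstart ms k \<le> bstart ms k'"
proof -
  assume "k \<le> k'"
  then obtain d where "k' = k + d" using le_Suc_ex by blast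
  then show ?thesis by (simp add: bstart_def take_add)
qed

lemma bstart_le_sum: "bstart ms k \<le> sum_list ms"
proof (cases "k \<le> length ms")
  case True thus ?thesis using bstart_mono[OF True, of ms] bstart_len by metis
next
  case False thus ?thesis by (simp add: bstart_def)
qed

lemma block_end: "k < length ms \<Longrightarrow> bstart ms k + ms ! k \<le> sum_list ms"
  using bstart_Suc[of k ms] bstart_le_sum[of ms "Suc k"] by simp

lemma row_unique:
  assumes "k < length ms" "k' < length ms"
    "bstart ms k \<le> r" "r < bstart ms k + ms ! k"
    "bstart ms k' \<le> r" "r < bstart ms k' + ms ! k'"
  shows "k = k'"
proof (rule ccontr)
  assume "k \<noteq> k'"
  then consider "k < k'" | "k' < k" by linarith
  then show False
  proof cases
    case 1
    have "bstart ms (Suc k) \<le> bstart ms k'" using 1 bstart_mono by simp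
    then show False using assms bstart_Suc[of k ms] by simp
  next
    case 2
    have "bstart ms (Suc k') \<le> bstart ms k" using 2 bstart_mono by simp
    then show False using assms bstart_Suc[of k' ms] by simp
  qed
qed

lemma row_exists:
  assumes "r < sum_list ms"
  shows "\<exists>k a. k < length ms \<and> a < ms ! k \<and> r = bstart ms k + a"
proof -
  have "\<forall>r. r < bstart ms k \<longrightarrow> k \<le> length ms \<longrightarrow> (\<exists>k' a. k' < k \<and> a < ms ! k' \<and> r = bstart ms k' + a)" for k
  proof (induction k)
    case 0 then show ?case by simp
  next
    case (Suc k)
    show ?case
    proof (intro allI impI)
      fix r assume r: "r < bstart ms (Suc k)" and kl: "Suc k \<le> length ms"
      show "\<exists>k' a. k' < Suc k \<and> a < ms ! k' \<and> r = bstart ms k' + a"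
      proof (cases "r < bstart ms k")
        case True then show ?thesis using Suc.IH kl by (meson Suc_leD less_SucI)
      next
        case False
        then show ?thesis using r bstart_Suc[of k ms] kl
          by (intro exI[of _ k] exI[of _ "r - bstart ms k"]) auto
      qed
    qed
  qed
  then show ?thesis using assms bstart_len[of ms] by (metis order_refl)
qed

lemma bstart_ge: "(\<forall>k<length ms. ms ! k \<ge> 1) \<Longrightarrow> k \<le> length ms \<Longrightarrow> k \<le> bstart ms k"
proof (induction k)
  case 0 then show ?case by simp
next
  case (Suc k)
  have k: "k < length ms" using Suc.prems by simp
  then have "1 \<le> ms ! k" using Suc.prems by simp
  moreover have "k \<le> bstart ms k" using Suc k by simp
  ultimately show ?case using bstart_Suc[OF k] by simp
qed

lemma cs_Suc: "(\<forall>k<length ms. ms ! k \<ge> 1) \<Longrightarrow> k < length ms \<Longrightarrow>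
   bstart ms (Suc k) - Suc k = (bstart ms k - k) + (ms ! k - 1)"
  using bstart_Suc[of k ms] bstart_ge[of ms k] by fastforce

lemma cs_mono: assumes "\<forall>k<length ms. ms ! k \<ge> 1" "k \<le> k'" "k' \<le> length ms"
  shows "bstart ms k - k \<le> bstart ms k' - k'"
  using assms(2,3)
proof (induction k' rule: dec_induct)
  case base then show ?case by simp
next
  case (step j) then show ?case using cs_Suc[OF assms(1), of j] by simp
qed

lemma col_unique:
  assumes bp: "\<forall>k<length ms. ms ! k \<ge> 1" and "k < length ms" "k' < length ms"
    "bstart ms k - k \<le> c" "c < bstart ms k - k + (ms ! k - 1)"
    "bstart ms k' - k' \<le> c" "c < bstart ms k' - k' + (ms ! k' - 1)"
  shows "k = k'"
proof (rule ccontr)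
  assume "k \<noteq> k'"
  then consider "k < k'" | "k' < k" by linarith
  then show False
  proof cases
    case 1
    have "bstart ms (Suc k) - Suc k \<le> bstart ms k' - k'" using 1 assms cs_mono[OF bp] by simp
    then show False using assms cs_Suc[OF bp, of k] by simp
  next
    case 2
    have "bstart ms (Suc k') - Suc k' \<le> bstart ms k - k" using 2 assms cs_mono[OF bp] by simp
    then show False using assms cs_Suc[OF bp, of k'] by simp
  qed
qed

lemma col_exists:
  assumes bp: "\<forall>k<length ms. ms ! k \<ge> 1" and "c < sum_list ms - length ms"
  shows "\<exists>k a. k < length ms \<and> a < ms ! k - 1 \<and> c = bstart ms k - k + a"
proof -
  have "\<forall>c. c < bstart ms k - k \<longrightarrow> k \<le> length ms \<longrightarrow> (\<exists>k' a. k' < k \<and> a < ms ! k' - 1 \<and> c = bstart ms k' - k' + a)" for k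
  proof (induction k)
    case 0 then show ?case by simp
  next
    case (Suc k)
    show ?case
    proof (intro allI impI)
      fix c assume r: "c < bstart ms (Suc k) - Suc k" and kl: "Suc k \<le> length ms"
      show "\<exists>k' a. k' < Suc k \<and> a < ms ! k' - 1 \<and> c = bstart ms k' - k' + a"
      proof (cases "c < bstart ms k - k")
        case True then show ?thesis using Suc.IH kl by (meson Suc_leD less_SucI)
      next
        case False
        then show ?thesis using r cs_Suc[OF bp, of k] kl
          by (intro exI[of _ k] exI[of _ "c - (bstart ms k - k)"]) auto
      qed
    qed
  qed
  then show ?thesis using assms bstart_len[of ms] by (metis order_refl)
qed

lemma sum_single:
  assumes "finite A" "x \<in> A" "\<forall>y\<in>A. y \<noteq> x \<longrightarrow> g y = 0"
  shows "sum g A = g x"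
proof -
  have "sum g A = g x + sum g (A - {x})" using sum.remove[OF assms(1,2)] .
  moreover have "sum g (A - {x}) = 0" using assms(3) by (intro sum.neutral) auto
  ultimately show ?thesis by simp
qed

lemma Imat_col:
  assumes bp: "\<forall>k<length ms. ms ! k \<ge> 1" and k: "k < length ms" and a: "a < ms ! k - 1"
  shows "Imat ms r (bstart ms k - k + a) =
     (if r = bstart ms k + a then 1 else if r = bstart ms k + ms ! k - 1 then -1 else 0)"
proof -
  let ?c = "bstart ms k - k + a"
  let ?f = "\<lambda>k'. if bstart ms k' \<le> r \<and> r < bstart ms k' + ms ! k' \<and>
         bstart ms k' - k' \<le> ?c \<and> ?c < bstart ms k' - k' + (ms ! k' - 1)
      then Iblock (ms ! k') (r - bstart ms k') (?c - (bstart ms k' - k')) else 0"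
  have "Imat ms r ?c = sum ?f {..<length ms}" by (simp add: Imat_def)
  also have "\<dots> = ?f k"
  proof (rule sum_single)
    show "\<forall>y\<in>{..<length ms}. y \<noteq> k \<longrightarrow> ?f y = 0"
    proof (intro ballI impI)
      fix y assume "y \<in> {..<length ms}" "y \<noteq> k"
      then have "y < length ms" "y \<noteq> k" by auto
      have "\<not> (bstart ms y - y \<le> ?c \<and> ?c < bstart ms y - y + (ms ! y - 1))"
      proof
        assume "bstart ms y - y \<le> ?c \<and> ?c < bstart ms y - y + (ms ! y - 1)"
        moreover have "bstart ms k - k \<le> ?c" "?c < bstart ms k - k + (ms ! k - 1)" using a by auto
        ultimately have "k = y" using col_unique[OF bp k \<open>y < length ms\<close>] by blast
        then show False using \<open>y \<noteq> k\<close> by simp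
      qed
      then show "?f y = 0" by auto
    qed
  qed (use k in auto)
  also have "\<dots> = (if r = bstart ms k + a then 1 else if r = bstart ms k + ms ! k - 1 then -1 else 0)"
    using a by (auto simp: Iblock_def)
  finally show ?thesis .
qed

lemma IT_col:
  assumes bp: "\<forall>k<length ms. ms ! k \<ge> 1" and k: "k < length ms" and a: "a < ms ! k - 1"
  shows "(\<Sum>r<sum_list ms. Imat ms r (bstart ms k - k + a) * t r) =
     t (bstart ms k + a) - t (bstart ms k + ms ! k - 1)"
proof -
  let ?A = "bstart ms k + a" and ?B = "bstart ms k + ms ! k - 1"
  have AB: "?A \<noteq> ?B" using a by auto
  have Bm: "?B < sum_list ms" proof -
    have "ms ! k \<ge> 1" using bp k by simp
    then show ?thesis using block_end[OF k] by linarith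
  qed
  have Am: "?A < sum_list ms" using Bm a by linarith
  have "(\<Sum>r<sum_list ms. Imat ms r (bstart ms k - k + a) * t r) =
     (\<Sum>r<sum_list ms. (if r = ?A then t ?A else 0) - (if r = ?B then t ?B else 0))"
    by (rule sum.cong) (use AB in \<open>auto simp: Imat_col[OF bp k a]\<close>)
  also have "\<dots> = t ?A - t ?B" using Am Bm by (simp add: sum_subtractf)
  finally show ?thesis .
qed

lemma IT_zero_const:
  assumes bp: "\<forall>k<length ms. ms ! k \<ge> 1"
    and h: "\<forall>c<sum_list ms - length ms. (\<Sum>r<sum_list ms. Imat ms r c * t r) = 0"
    and k: "k < length ms" and a: "a < ms ! k"
  shows "t (bstart ms k + a) = t (bstart ms k + ms ! k - 1)"
proof (cases "a < ms ! k - 1")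
  case True
  have "bstart ms k - k + a < bstart ms (Suc k) - Suc k" using cs_Suc[OF bp k] True by simp
  also have "\<dots> \<le> bstart ms (length ms) - length ms" using cs_mono[OF bp, of "Suc k" "length ms"] k by simp
  finally have "bstart ms k - k + a < sum_list ms - length ms" by (simp add: bstart_len)
  then show ?thesis using h IT_col[OF bp k True, of t] by simp
next
  case False then have "a = ms ! k - 1" using a by simp
  then show ?thesis using a by simp
qed

lemma const_IT_zero:
  assumes bp: "\<forall>k<length ms. ms ! k \<ge> 1"
    and h: "\<forall>k<length ms. \<forall>a<ms ! k. t (bstart ms k + a) = t (bstart ms k + ms ! k - 1)"
    and c: "c < sum_list ms - length ms"
  shows "(\<Sum>r<sum_list ms. Imat ms r c * t r) = 0"
proof -
  obtain k a where ka: "k < length ms" "a < ms ! k - 1" "c = bstart ms k - k + a"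
    using col_exists[OF bp c] by blast
  show ?thesis using IT_col[OF bp ka(1,2), of t] h ka by simp
qed

lemma Jmat_block:
  assumes "k0 < length ms" "a < ms ! k0" "k < length ms"
  shows "Jmat ms k (bstart ms k0 + a) = (if k = k0 then 1 else 0)"
  using row_unique[OF assms(3,1), of "bstart ms k0 + a"] assms by (auto simp: Jmat_def)

lemma Jsum_block:
  assumes "k0 < length ms" "a < ms ! k0"
  shows "(\<Sum>k<length ms. Jmat ms k (bstart ms k0 + a) * \<mu> k) = \<mu> k0"
proof -
  have "(\<Sum>k<length ms. Jmat ms k (bstart ms k0 + a) * \<mu> k) = (\<Sum>k<length ms. if k = k0 then \<mu> k else 0)"
    by (rule sum.cong) (use Jmat_block[OF assms] in auto)
  also have "\<dots> = \<mu> k0" using assms by simp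
  finally show ?thesis .
qed

lemma Imat_out:
  assumes "sum_list ms \<le> r" shows "Imat ms r c = 0"
  unfolding Imat_def
  by (rule sum.neutral) (use block_end[of _ ms] assms in fastforce)

lemma Jmat_out:
  assumes "sum_list ms \<le> r" "k < length ms" shows "Jmat ms k r = 0"
  using block_end[OF assms(2)] assms by (auto simp: Jmat_def)

lemma vpow_exp:
  assumes "\<forall>i<p. x i > 0"
  shows "vpow x z p = exp (\<Sum>i<p. z i * ln (x i))"
proof -
  have "vpow x z p = (\<Prod>i<p. exp (z i * ln (x i)))"
    unfolding vpow_def using assms by (intro prod.cong) (auto simp: powr_def mult.commute)
  then show ?thesis by (simp add: exp_sum)
qed


lemma fwd:
  fixes n m :: nat and ms :: "nat list" and B Mstar :: "nat \<Rightarrow> nat \<Rightarrow> real"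
    and c :: "nat \<Rightarrow> real" and Cs :: "nat \<Rightarrow> (nat \<Rightarrow> real) set"
  assumes part: "sum_list ms = m"
    and bp: "\<forall>k<length ms. ms ! k \<ge> 1"
    and c_pos: "\<forall>j<m. c j > 0"
    and Cs_cone: "\<forall>k<length ms. is_cone (Cs k)"
    and ginv: "\<forall>i<n. \<forall>j<m - length ms.
        mmul (mmul (Mmat ms B) Mstar (m - length ms)) (Mmat ms B) n i j = Mmat ms B i j"
    and xZ: "x \<in> Zc ms Cs n B c"
  shows "\<exists>u w. x = (\<lambda>i. u i * exp (w i)) \<and>
       u \<in> (\<lambda>y. mpow (\<lambda>i. y i / c i) (mmul (Imat ms) Mstar (m - length ms)) m n) ` Yc ms Cs n B c
       \<and> w \<in> Lperp ms n B"
proof -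
  have cp: "\<And>j. j < m \<Longrightarrow> c j > 0" using c_pos by simp
  define l where "l = length ms"
  define p where "p = m - l"
  define M where "M = Mmat ms B"
  define F where "F = (\<lambda>j. if j < m then c j * mpow x B n m j else 0)"
  have xpos: "x \<in> posvecs n" and FC: "F \<in> coeff_cone ms Cs"
    using xZ part by (auto simp: Zc_def F_def)
  have x0: "\<forall>i<n. x i > 0" and xv: "\<forall>i\<ge>n. x i = 0" using xpos by (auto simp: posvecs_def vecs_def)
  define lx where "lx i = ln (x i)" for i
  define g where "g j = (\<Sum>i<n. B i j * lx i)" for j
  have Fj: "F j = c j * exp (g j)" if "j < m" for j
    using that x0 by (simp add: F_def mpow_def vpow_exp g_def lx_def)
  have Fpos: "F j > 0" if "j < m" for j using Fj[OF that] c_pos that by simp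
  have blk_lt: "bstart ms k + a < m" if "k < l" "a < ms ! k" for k a
    using block_end[of k ms] that part l_def by simp
  define \<sigma> where "\<sigma> k = (\<Sum>a<ms ! k. F (bstart ms k + a))" for k
  have \<sigma>pos: "\<sigma> k > 0" if "k < l" for k
  proof -
    have "ms ! k \<ge> 1" using bp that l_def by simp
    then have "0 \<in> {..<ms ! k}" by simp
    then have "{..<ms ! k} \<noteq> {}" by blast
    then show ?thesis unfolding \<sigma>_def using Fpos blk_lt[OF that] by (intro sum_pos) auto
  qed
  define y where "y j = (if j < m then F j / (\<Sum>k<l. Jmat ms k j * \<sigma> k) else 0)" for j
  have yblk: "y (bstart ms k + a) = F (bstart ms k + a) / \<sigma> k" if "k < l" "a < ms ! k" for k a
    using Jsum_block[of k ms a \<sigma>] that blk_lt[OF that] l_def by (simp add: y_def)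
  have yrow: "\<exists>k a. k < l \<and> a < ms ! k \<and> j = bstart ms k + a" if "j < m" for j
    using row_exists[of j ms] that part l_def by simp
  have ypos: "y j > 0" if "j < m" for j
    using yrow[OF that] yblk Fpos blk_lt \<sigma>pos by fastforce
  define L where "L j = (\<Sum>k<l. Jmat ms k j * ln (\<sigma> k))" for j
  have Lblk: "L (bstart ms k + a) = ln (\<sigma> k)" if "k < l" "a < ms ! k" for k a
    using Jsum_block[of k ms a "\<lambda>k. ln (\<sigma> k)"] that l_def by (simp add: L_def)
  have lny: "ln (y j) = ln (c j) + g j - L j" if jm: "j < m" for j
  proof -
    obtain k a where ka: "k < l" "a < ms ! k" "j = bstart ms k + a" using yrow[OF jm] by blast
    have "y j = c j * exp (g j) / \<sigma> k" using yblk[OF ka(1,2)] Fj jm ka(3) by simp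
    moreover have "c j > 0" using c_pos jm by simp
    ultimately show ?thesis using Lblk[OF ka(1,2)] ka(3) \<sigma>pos[OF ka(1)]
      by (simp add: ln_div ln_mult)
  qed
  have Lconst: "\<forall>k<length ms. \<forall>a<ms ! k. L (bstart ms k + a) = L (bstart ms k + ms ! k - 1)"
  proof (intro allI impI)
    fix k a assume "k < length ms" "a < ms ! k"
    then show "L (bstart ms k + a) = L (bstart ms k + ms ! k - 1)"
      using Lblk[of k a] Lblk[of k "ms ! k - 1"] l_def by simp
  qed
  have yv: "y \<in> vecs m" by (simp add: vecs_def y_def)
  have yC: "y \<in> coeff_cone ms Cs"
    unfolding coeff_cone_def part
  proof (intro CollectI conjI allI impI yv)
    fix k assume k: "k < length ms"
    have FCk: "blockv ms k F \<in> Cs k" using FC k by (simp add: coeff_cone_def)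
    have eq: "blockv ms k y = (\<lambda>i. (1 / \<sigma> k) * blockv ms k F i)"
      using k by (auto simp: blockv_def yblk l_def)
    have cone: "\<And>v t. v \<in> Cs k \<Longrightarrow> t > 0 \<Longrightarrow> (\<lambda>i. t * v i) \<in> Cs k"
      using Cs_cone k unfolding is_cone_def by blast
    have "(\<lambda>i. (1 / \<sigma> k) * blockv ms k F i) \<in> Cs k"
      by (rule cone) (use FCk \<sigma>pos[of k] k l_def in auto)
    then show "blockv ms k y \<in> Cs k" unfolding eq .
  qed
  have yS: "y \<in> simplices ms"
    unfolding simplices_def part
  proof (intro CollectI conjI allI impI yv)
    fix j show "0 \<le> y j" using ypos[of j] by (cases "j < m") (auto simp: y_def)
  next
    fix k assume k: "k < length ms"
    have "(\<Sum>a<ms ! k. y (bstart ms k + a)) = (\<Sum>a<ms ! k. F (bstart ms k + a) / \<sigma> k)"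
      by (rule sum.cong) (use k yblk l_def in auto)
    also have "\<dots> = \<sigma> k / \<sigma> k" by (simp only: \<sigma>_def sum_divide_distrib)
    also have "\<dots> = 1" using \<sigma>pos[of k] k l_def by simp
    finally show "(\<Sum>a<ms ! k. y (bstart ms k + a)) = 1" .
  qed
  have yD: "vpow y z m = vpow c z m" if zD: "z \<in> Dsp ms n B" for z
  proof -
    have hz: "\<forall>i<n + l. (\<Sum>j<m. Bcal ms n B i j * z j) = 0"
      using zD part by (simp add: Dsp_def l_def)
    have Bz: "(\<Sum>j<m. B i j * z j) = 0" if "i < n" for i
      using hz[rule_format, of i] that by (simp add: Bcal_def)
    have Jz: "(\<Sum>j<m. Jmat ms k j * z j) = 0" if "k < l" for k
      using hz[rule_format, of "n + k"] that by (auto simp: Bcal_def)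
    have e1: "vpow y z m = exp (\<Sum>j<m. z j * ln (y j))" using ypos by (simp add: vpow_exp)
    have e2: "vpow c z m = exp (\<Sum>j<m. z j * ln (c j))" using cp by (simp add: vpow_exp)
    have "(\<Sum>j<m. z j * ln (y j)) = (\<Sum>j<m. z j * ln (c j) + z j * g j - z j * L j)"
      by (rule sum.cong) (auto simp: lny algebra_simps)
    also have "\<dots> = (\<Sum>j<m. z j * ln (c j)) + (\<Sum>j<m. z j * g j) - (\<Sum>j<m. z j * L j)"
      by (simp add: sum.distrib sum_subtractf)
    also have "(\<Sum>j<m. z j * g j) = (\<Sum>i<n. lx i * (\<Sum>j<m. B i j * z j))"
      unfolding g_def by (simp add: sum_distrib_left sum_distrib_right mult_ac sum.swap[of _ "{..<m}"])
    also have "\<dots> = 0" using Bz by simp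
    also have "(\<Sum>j<m. z j * L j) = (\<Sum>k<l. ln (\<sigma> k) * (\<Sum>j<m. Jmat ms k j * z j))"
      unfolding L_def by (simp add: sum_distrib_left sum_distrib_right mult_ac sum.swap[of _ "{..<m}"])
    also have "\<dots> = 0" using Jz by simp
    finally show ?thesis using e1 e2 by simp
  qed
  have yY: "y \<in> Yc ms Cs n B c"
    using yC yS yD part by (simp add: Yc_def coeff_set_def)
  define E where "E = mmul (Imat ms) Mstar p"
  define u where "u = mpow (\<lambda>i. y i / c i) E m n"
  define v where "v j = ln (y j / c j)" for j
  have vj: "v j = g j - L j" if "j < m" for j
    using lny[OF that] ypos[OF that] cp[OF that] by (simp add: v_def ln_div)
  have ui: "u i = exp (\<Sum>j<m. E j i * v j)" if "i < n" for i
    using that ypos cp by (simp add: u_def mpow_def vpow_exp v_def)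
  have u0: "u i = 0" if "i \<ge> n" for i using that by (simp add: u_def mpow_def)
  define w where "w i = (if i < n then lx i - ln (u i) else 0)" for i
  have xeq: "x = (\<lambda>i. u i * exp (w i))"
  proof
    fix i show "x i = u i * exp (w i)"
    proof (cases "i < n")
      case True then show ?thesis using ui[OF True] x0 by (simp add: w_def lx_def exp_diff)
    next
      case False then show ?thesis using xv u0 by simp
    qed
  qed
  have IL: "(\<Sum>j<m. Imat ms j q * L j) = 0" if "q < p" for q
    using const_IT_zero[OF bp Lconst, of q] that part by (simp add: p_def l_def)
  have Ig: "(\<Sum>j<m. Imat ms j q * g j) = (\<Sum>i'<n. M i' q * lx i')" for q
    unfolding g_def M_def Mmat_def mmul_def part
    by (simp add: sum_distrib_left sum_distrib_right mult_ac sum.swap[of _ "{..<m}"])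
  have Iv: "(\<Sum>j<m. Imat ms j q * v j) = (\<Sum>i'<n. M i' q * lx i')" if "q < p" for q
  proof -
    have "(\<Sum>j<m. Imat ms j q * v j) = (\<Sum>j<m. Imat ms j q * g j - Imat ms j q * L j)"
      by (rule sum.cong) (auto simp: vj algebra_simps)
    also have "\<dots> = (\<Sum>i'<n. M i' q * lx i')" using IL[OF that] Ig by (simp add: sum_subtractf)
    finally show ?thesis .
  qed
  have lnu: "ln (u i) = (\<Sum>q<p. Mstar q i * (\<Sum>i'<n. M i' q * lx i'))" if "i < n" for i
  proof -
    have "ln (u i) = (\<Sum>j<m. E j i * v j)" using ui[OF that] by simp
    also have "\<dots> = (\<Sum>q<p. Mstar q i * (\<Sum>j<m. Imat ms j q * v j))"
      unfolding E_def mmul_def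
      by (simp add: sum_distrib_left sum_distrib_right mult_ac sum.swap[of _ "{..<m}"])
    also have "\<dots> = (\<Sum>q<p. Mstar q i * (\<Sum>i'<n. M i' q * lx i'))"
      by (rule sum.cong) (auto simp: Iv)
    finally show ?thesis .
  qed
  have wperp: "(\<Sum>i<n. w i * M i j) = 0" if jp: "j < p" for j
  proof -
    have "(\<Sum>i<n. w i * M i j) = (\<Sum>i<n. lx i * M i j - ln (u i) * M i j)"
      by (rule sum.cong) (auto simp: w_def algebra_simps)
    also have "\<dots> = (\<Sum>i<n. lx i * M i j) - (\<Sum>i<n. ln (u i) * M i j)"
      by (simp add: sum_subtractf)
    also have "(\<Sum>i<n. ln (u i) * M i j) =
       (\<Sum>i<n. (\<Sum>q<p. Mstar q i * (\<Sum>i'<n. M i' q * lx i')) * M i j)"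
      by (rule sum.cong) (auto simp: lnu)
    also have "\<dots> = (\<Sum>i<n. \<Sum>q<p. \<Sum>i'<n. lx i' * (M i' q * Mstar q i * M i j))"
      by (simp add: sum_distrib_left sum_distrib_right mult_ac)
    also have "\<dots> = (\<Sum>i<n. \<Sum>i'<n. \<Sum>q<p. lx i' * (M i' q * Mstar q i * M i j))"
      by (rule sum.cong[OF refl], rule sum.swap)
    also have "\<dots> = (\<Sum>i'<n. \<Sum>i<n. \<Sum>q<p. lx i' * (M i' q * Mstar q i * M i j))"
      by (rule sum.swap)
    also have "\<dots> = (\<Sum>i'<n. lx i' * (\<Sum>i<n. (\<Sum>q<p. M i' q * Mstar q i) * M i j))"
      by (simp add: sum_distrib_left sum_distrib_right mult_ac)
    also have "\<dots> = (\<Sum>i'<n. lx i' * M i' j)"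
    proof (rule sum.cong)
      fix i' assume "i' \<in> {..<n}"
      then show "lx i' * (\<Sum>i<n. (\<Sum>q<p. M i' q * Mstar q i) * M i j) = lx i' * M i' j"
        using ginv jp by (simp add: mmul_def M_def p_def l_def)
    qed simp
    finally show ?thesis by (simp add: mult.commute)
  qed
  have wL: "w \<in> Lperp ms n B"
    unfolding Lperp_def
  proof (intro CollectI conjI ballI)
    show "w \<in> vecs n" by (simp add: vecs_def w_def)
  next
    fix v' assume "v' \<in> Lsp ms n B"
    then obtain u' where v': "\<forall>i<n. v' i = (\<Sum>j<p. M i j * u' j)"
      using part by (auto simp: Lsp_def M_def p_def l_def)
    have "(\<Sum>i<n. w i * v' i) = (\<Sum>i<n. w i * (\<Sum>j<p. M i j * u' j))"
      by (rule sum.cong) (auto simp: v')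
    also have "\<dots> = (\<Sum>j<p. u' j * (\<Sum>i<n. w i * M i j))"
      by (simp add: sum_distrib_left sum_distrib_right mult_ac sum.swap[of _ "{..<n}"])
    also have "\<dots> = 0" using wperp by simp
    finally show "(\<Sum>i<n. w i * v' i) = 0" .
  qed
  show ?thesis
    using xeq yY wL unfolding u_def E_def p_def l_def by blast
qed


lemma bwd:
  fixes n m :: nat and ms :: "nat list" and B Mstar :: "nat \<Rightarrow> nat \<Rightarrow> real"
    and c :: "nat \<Rightarrow> real" and Cs :: "nat \<Rightarrow> (nat \<Rightarrow> real) set"
  assumes part: "sum_list ms = m"
    and bp: "\<forall>k<length ms. ms ! k \<ge> 1"
    and c_pos: "\<forall>j<m. c j > 0"
    and Cs_sub: "\<forall>k<length ms. Cs k \<subseteq> posvecs (ms ! k)"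
    and Cs_cone: "\<forall>k<length ms. is_cone (Cs k)"
    and ginv: "\<forall>i<n. \<forall>j<m - length ms.
        mmul (mmul (Mmat ms B) Mstar (m - length ms)) (Mmat ms B) n i j = Mmat ms B i j"
    and yY: "y \<in> Yc ms Cs n B c" and wL: "w \<in> Lperp ms n B"
  shows "(\<lambda>i. mpow (\<lambda>i. y i / c i) (mmul (Imat ms) Mstar (m - length ms)) m n i * exp (w i))
     \<in> Zc ms Cs n B c"
proof -
  have cp: "\<And>j. j < m \<Longrightarrow> c j > 0" using c_pos by simp
  define l where "l = length ms"
  define p where "p = m - l"
  define M where "M = Mmat ms B"
  define E where "E = mmul (Imat ms) Mstar p"
  define u where "u = mpow (\<lambda>i. y i / c i) E m n"
  have yC: "y \<in> coeff_cone ms Cs" using yY by (simp add: Yc_def coeff_set_def)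
  have yD: "\<And>z. z \<in> Dsp ms n B \<Longrightarrow> vpow y z m = vpow c z m" using yY part by (simp add: Yc_def)
  have blk_lt: "bstart ms k + a < m" if "k < l" "a < ms ! k" for k a
    using block_end[of k ms] that part l_def by simp
  have yrow: "\<exists>k a. k < l \<and> a < ms ! k \<and> j = bstart ms k + a" if "j < m" for j
    using row_exists[of j ms] that part l_def by simp
  have ypos: "y j > 0" if jm: "j < m" for j
  proof -
    obtain k a where ka: "k < l" "a < ms ! k" "j = bstart ms k + a" using yrow[OF jm] by blast
    have "blockv ms k y \<in> Cs k" using yC ka l_def by (simp add: coeff_cone_def)
    then have "blockv ms k y \<in> posvecs (ms ! k)" using Cs_sub ka l_def by blast
    then have "blockv ms k y a > 0" using ka by (simp add: posvecs_def)
    then show ?thesis using ka by (simp add: blockv_def)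
  qed
  have ynz: "y j \<noteq> 0" if "j < m" for j using ypos[OF that] by simp
  have cnz: "c j \<noteq> 0" if "j < m" for j using cp[OF that] by simp
  define v where "v j = ln (y j / c j)" for j
  have ui: "u i = exp (\<Sum>j<m. E j i * v j)" if "i < n" for i
    using that ypos cp by (simp add: u_def mpow_def vpow_exp v_def)
  have u0: "u i = 0" if "i \<ge> n" for i using that by (simp add: u_def mpow_def)
  have wv: "\<forall>i\<ge>n. w i = 0" using wL by (simp add: Lperp_def vecs_def)
  define x where "x = (\<lambda>i. u i * exp (w i))"
  define h where "h i = (\<Sum>j<m. E j i * v j) + w i" for i
  have xi: "x i = exp (h i)" if "i < n" for i using ui[OF that] by (simp add: x_def h_def exp_add)
  have xpos: "x \<in> posvecs n"
    using xi u0 by (simp add: posvecs_def vecs_def x_def)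
  define F where "F = (\<lambda>j. if j < m then c j * mpow x B n m j else 0)"
  define t where "t j = ln (c j) + (\<Sum>i<n. B i j * h i) - ln (y j)" for j
  have Fj: "F j = y j * exp (t j)" if jm: "j < m" for j
  proof -
    have "F j = c j * exp (\<Sum>i<n. B i j * h i)"
      using jm xi by (simp add: F_def mpow_def vpow_exp)
    then show ?thesis using cp[OF jm] ypos[OF jm] by (simp add: t_def exp_diff exp_add)
  qed
  have Mw: "(\<Sum>i<n. M i q * w i) = 0" if qp: "q < p" for q
  proof -
    define col where "col i = (if i < n then M i q else 0)" for i
    have "col \<in> Lsp ms n B"
      unfolding Lsp_def
    proof (intro CollectI conjI bexI)
      show "col \<in> vecs n" by (simp add: vecs_def col_def)
      show "(\<lambda>j. if j = q then 1 else 0) \<in> vecs (sum_list ms - length ms)"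
        using qp part by (simp add: vecs_def p_def l_def)
      show "\<forall>i<n. col i = (\<Sum>j<sum_list ms - length ms. Mmat ms B i j * (if j = q then 1 else 0))"
      proof (intro allI impI)
        fix i assume "i < n"
        have "(\<Sum>j<sum_list ms - length ms. Mmat ms B i j * (if j = q then 1 else 0)) =
          (\<Sum>j<sum_list ms - length ms. if j = q then Mmat ms B i j else 0)"
          by (rule sum.cong) auto
        then show "col i = (\<Sum>j<sum_list ms - length ms. Mmat ms B i j * (if j = q then 1 else 0))"
          using qp part \<open>i < n\<close> by (simp add: col_def M_def p_def l_def)
      qed
    qed
    then have "(\<Sum>i<n. w i * col i) = 0" using wL by (simp add: Lperp_def)
    then show ?thesis by (simp add: col_def mult.commute)
  qed
  define Q where "Q q = (\<Sum>j<m. Imat ms j q * v j)" for q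
  define K where "K q' q = (\<Sum>i<n. Mstar q' i * M i q)" for q' q
  have ITJ: "(\<Sum>j<m. Imat ms j q' * Jmat ms k j) = 0" if "k < l" "q' < p" for k q'
  proof -
    have "\<forall>k0<length ms. \<forall>a<ms ! k0. Jmat ms k (bstart ms k0 + a) = Jmat ms k (bstart ms k0 + ms ! k0 - 1)"
    proof (intro allI impI)
      fix k0 a assume "k0 < length ms" "a < ms ! k0"
      then show "Jmat ms k (bstart ms k0 + a) = Jmat ms k (bstart ms k0 + ms ! k0 - 1)"
        using Jmat_block[of k0 ms a k] Jmat_block[of k0 ms "ms ! k0 - 1" k] that l_def by simp
    qed
    from const_IT_zero[OF bp this, of q'] show ?thesis using that part by (simp add: p_def l_def)
  qed
  have Ev: "(\<Sum>j<m. E j i * v j) = (\<Sum>q'<p. Mstar q' i * Q q')" for i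
    unfolding E_def mmul_def Q_def
    by (simp add: sum_distrib_left sum_distrib_right mult_ac sum.swap[of _ "{..<m}"])
  have key: "(\<Sum>q'<p. K q' q * Q q') = Q q" if qp: "q < p" for q
  proof -
    define uu where "uu q' = (if q' = q then 1 else 0) - K q' q" for q'
    define zz where "zz r = (if r < m then \<Sum>q'<p. Imat ms r q' * uu q' else 0)" for r
    have MK: "(\<Sum>q'<p. M i q' * K q' q) = M i q" if "i < n" for i
    proof -
      have "(\<Sum>q'<p. M i q' * K q' q) = (\<Sum>q'<p. \<Sum>i'<n. M i q' * Mstar q' i' * M i' q)"
        unfolding K_def by (simp add: sum_distrib_left mult_ac)
      also have "\<dots> = (\<Sum>i'<n. \<Sum>q'<p. M i q' * Mstar q' i' * M i' q)" by (rule sum.swap)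
      also have "\<dots> = (\<Sum>i'<n. (\<Sum>q'<p. M i q' * Mstar q' i') * M i' q)"
        by (simp add: sum_distrib_right)
      also have "\<dots> = M i q" using ginv that qp by (simp add: mmul_def M_def p_def l_def)
      finally show ?thesis .
    qed
    have Mu: "(\<Sum>q'<p. M i q' * uu q') = 0" if "i < n" for i
    proof -
      have "(\<Sum>q'<p. M i q' * uu q') = (\<Sum>q'<p. (if q' = q then M i q' else 0) - M i q' * K q' q)"
        by (rule sum.cong) (auto simp: uu_def algebra_simps)
      also have "\<dots> = 0" using MK[OF that] qp by (simp add: sum_subtractf)
      finally show ?thesis .
    qed
    have zzs: "(\<Sum>j<m. f j * zz j) = (\<Sum>q'<p. uu q' * (\<Sum>j<m. Imat ms j q' * f j))" for f
    proof -
      have "(\<Sum>j<m. f j * zz j) = (\<Sum>j<m. f j * (\<Sum>q'<p. Imat ms j q' * uu q'))"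
        by (rule sum.cong) (auto simp: zz_def)
      also have "\<dots> = (\<Sum>q'<p. uu q' * (\<Sum>j<m. Imat ms j q' * f j))"
        by (simp add: sum_distrib_left sum_distrib_right mult_ac sum.swap[of _ "{..<m}"])
      finally show ?thesis .
    qed
    have Bzz: "(\<Sum>j<m. B i j * zz j) = 0" if "i < n" for i
    proof -
      have "(\<Sum>j<m. B i j * zz j) = (\<Sum>q'<p. uu q' * (\<Sum>j<m. Imat ms j q' * B i j))" by (rule zzs)
      also have "\<dots> = (\<Sum>q'<p. M i q' * uu q')"
        unfolding M_def Mmat_def mmul_def part by (simp add: mult_ac)
      also have "\<dots> = 0" using Mu[OF that] .
      finally show ?thesis .
    qed
    have Jzz: "(\<Sum>j<m. Jmat ms k j * zz j) = 0" if "k < l" for k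
    proof -
      have "(\<Sum>j<m. Jmat ms k j * zz j) = (\<Sum>q'<p. uu q' * (\<Sum>j<m. Imat ms j q' * Jmat ms k j))" by (rule zzs)
      also have "\<dots> = 0" using ITJ[OF that] by simp
      finally show ?thesis .
    qed
    have zzD: "zz \<in> Dsp ms n B"
      unfolding Dsp_def part
    proof (intro CollectI conjI allI impI)
      show "zz \<in> vecs m" by (simp add: vecs_def zz_def)
    next
      fix i assume i: "i < n + length ms"
      show "(\<Sum>j<m. Bcal ms n B i j * zz j) = 0"
      proof (cases "i < n")
        case True then show ?thesis using Bzz by (simp add: Bcal_def)
      next
        case False then show ?thesis using Jzz[of "i - n"] i l_def by (simp add: Bcal_def)
      qed
    qed
    have "vpow y zz m = vpow c zz m" using yD[OF zzD] .
    then have "exp (\<Sum>j<m. zz j * ln (y j)) = exp (\<Sum>j<m. zz j * ln (c j))"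
      using ypos cp by (simp add: vpow_exp)
    then have "(\<Sum>j<m. zz j * ln (y j)) - (\<Sum>j<m. zz j * ln (c j)) = 0" by simp
    then have "(\<Sum>j<m. v j * zz j) = 0"
    proof -
      assume h: "(\<Sum>j<m. zz j * ln (y j)) - (\<Sum>j<m. zz j * ln (c j)) = 0"
      have "(\<Sum>j<m. v j * zz j) = (\<Sum>j<m. zz j * ln (y j) - zz j * ln (c j))"
        by (rule sum.cong) (auto simp: v_def ln_div ypos cp ynz cnz algebra_simps)
      then show ?thesis using h by (simp add: sum_subtractf)
    qed
    then have "(\<Sum>q'<p. uu q' * Q q') = 0" using zzs[of v] by (simp add: Q_def)
    moreover have "(\<Sum>q'<p. uu q' * Q q') = Q q - (\<Sum>q'<p. K q' q * Q q')"
    proof -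
      have "(\<Sum>q'<p. uu q' * Q q') = (\<Sum>q'<p. (if q' = q then Q q' else 0) - K q' q * Q q')"
        by (rule sum.cong) (auto simp: uu_def algebra_simps)
      then show ?thesis using qp by (simp add: sum_subtractf)
    qed
    ultimately show ?thesis by simp
  qed
  have ITt: "(\<Sum>j<m. Imat ms j q * t j) = 0" if qp: "q < p" for q
  proof -
    have "(\<Sum>j<m. Imat ms j q * t j) = (\<Sum>j<m. Imat ms j q * (\<Sum>i<n. B i j * h i) - Imat ms j q * v j)"
      by (rule sum.cong) (auto simp: t_def v_def ln_div ypos cp ynz cnz algebra_simps)
    also have "\<dots> = (\<Sum>j<m. Imat ms j q * (\<Sum>i<n. B i j * h i)) - Q q"
      by (simp add: sum_subtractf Q_def)
    also have "(\<Sum>j<m. Imat ms j q * (\<Sum>i<n. B i j * h i)) = (\<Sum>i<n. M i q * h i)"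
      unfolding M_def Mmat_def mmul_def part
      by (simp add: sum_distrib_left sum_distrib_right mult_ac sum.swap[of _ "{..<m}"])
    also have "\<dots> = (\<Sum>i<n. M i q * (\<Sum>q'<p. Mstar q' i * Q q')) + (\<Sum>i<n. M i q * w i)"
      by (simp add: h_def Ev distrib_left sum.distrib)
    also have "(\<Sum>i<n. M i q * (\<Sum>q'<p. Mstar q' i * Q q')) = (\<Sum>q'<p. K q' q * Q q')"
      unfolding K_def
      by (simp add: sum_distrib_left sum_distrib_right mult_ac sum.swap[of _ "{..<n}"])
    also have "\<dots> = Q q" using key[OF qp] .
    finally show ?thesis using Mw[OF qp] by simp
  qed
  have tconst: "t (bstart ms k + a) = t (bstart ms k + ms ! k - 1)" if "k < l" "a < ms ! k" for k a
    using IT_zero_const[OF bp, of t k a] ITt that part by (simp add: p_def l_def)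
  have FC: "F \<in> coeff_cone ms Cs"
    unfolding coeff_cone_def part
  proof (intro CollectI conjI allI impI)
    show "F \<in> vecs m" by (simp add: vecs_def F_def)
  next
    fix k assume k: "k < length ms"
    have eq: "blockv ms k F = (\<lambda>a. exp (t (bstart ms k + ms ! k - 1)) * blockv ms k y a)"
      using k tconst blk_lt l_def by (auto simp: blockv_def Fj)
    have cone: "\<And>v t. v \<in> Cs k \<Longrightarrow> t > 0 \<Longrightarrow> (\<lambda>i. t * v i) \<in> Cs k"
      using Cs_cone k unfolding is_cone_def by blast
    have "(\<lambda>a. exp (t (bstart ms k + ms ! k - 1)) * blockv ms k y a) \<in> Cs k"
      by (rule cone) (use yC k in \<open>auto simp: coeff_cone_def\<close>)
    then show "blockv ms k F \<in> Cs k" unfolding eq .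
  qed
  have "x \<in> Zc ms Cs n B c" unfolding Zc_def part using xpos FC by (simp add: F_def)
  then show ?thesis by (simp add: x_def u_def E_def p_def l_def)
qed


theorem theorem4:
  fixes n m :: nat and ms :: "nat list" and B Mstar :: "nat \<Rightarrow> nat \<Rightarrow> real"
    and c :: "nat \<Rightarrow> real" and Cs :: "nat \<Rightarrow> (nat \<Rightarrow> real) set"
  assumes part: "sum_list ms = m"
    and blocks_pos: "\<forall>k<length ms. ms ! k \<ge> 1"
    and c_pos: "\<forall>j<m. c j > 0"
    and Cs_sub: "\<forall>k<length ms. Cs k \<subseteq> posvecs (ms ! k)"
    and Cs_cone: "\<forall>k<length ms. is_cone (Cs k)"
    and C_ne: "coeff_cone ms Cs \<noteq> {}"
    and ginv: "\<forall>i<n. \<forall>j<m - length ms.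
        mmul (mmul (Mmat ms B) Mstar (m - length ms)) (Mmat ms B) n i j = Mmat ms B i j"
  shows "Zc ms Cs n B c =
    {(\<lambda>i. u i * exp (w i)) | u w.
       u \<in> (\<lambda>y. mpow (\<lambda>i. y i / c i) (mmul (Imat ms) Mstar (m - length ms)) m n) ` Yc ms Cs n B c
       \<and> w \<in> Lperp ms n B}"
proof
  show "Zc ms Cs n B c \<subseteq> {(\<lambda>i. u i * exp (w i)) | u w.
       u \<in> (\<lambda>y. mpow (\<lambda>i. y i / c i) (mmul (Imat ms) Mstar (m - length ms)) m n) ` Yc ms Cs n B c
       \<and> w \<in> Lperp ms n B}"
  proof
    fix x assume "x \<in> Zc ms Cs n B c"
    from fwd[OF part blocks_pos c_pos Cs_cone ginv this] show "x \<in> {(\<lambda>i. u i * exp (w i)) | u w.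
       u \<in> (\<lambda>y. mpow (\<lambda>i. y i / c i) (mmul (Imat ms) Mstar (m - length ms)) m n) ` Yc ms Cs n B c
       \<and> w \<in> Lperp ms n B}" by blast
  qed
next
  show "{(\<lambda>i. u i * exp (w i)) | u w.
       u \<in> (\<lambda>y. mpow (\<lambda>i. y i / c i) (mmul (Imat ms) Mstar (m - length ms)) m n) ` Yc ms Cs n B c
       \<and> w \<in> Lperp ms n B} \<subseteq> Zc ms Cs n B c"
    using bwd[OF part blocks_pos c_pos Cs_sub Cs_cone ginv] by blast
qed

end
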